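(* Let $(\delta_n)_{n\ge1}$ be real numbers with $1<\delta_n\to\infty$. Then there exist a nontrivial centralizer $\Omega:\ell_2\to\omega$, numbers $\kappa(n)$ with $\kappa(n)\le\delta_n$ for all $n$ and $\kappa(n)\to\infty$, and a sequence $(a_n)_{n=1}^\infty\subseteq\ell_2$ of non-null vectors with $\operatorname{supp}a_n\subseteq\{1,\dots,n\}$ such that $$\Omega(a_n)=-2a_n\cdot\log\kappa(n)\quad\text{for all }n.$$
   Context: $\omega$ denotes the space of all complex sequences. A centralizer on $\ell_2$ is a (homogeneous) map $\Omega:\ell_2\to\omega$ for which there is $C>0$ with $\Omega(ab)-a\Omega(b)\in\ell_2$ and $\|\Omega(ab)-a\Omega(b)\|_{\ell_2}\le C\|a\|_\infty\|b\|_{\ell_2}$ for all $a\in\ell_\infty$, $b\in\ell_2$ (coordinatewise products). $\Omega$ is trivial if there is a linear (possibly unbounded) map $L:\ell_2\to\omega$ with $\sup_{\|x\|_{\ell_2}\le1}\|\Omega(x)-L(x)\|_{\ell_2}<\infty$, and nontrivial otherwise. *)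

theory Defs
  imports "HOL-Analysis.Analysis"
begin

text \<open>Complex sequences (the space omega) are functions nat => complex.
  Coordinates are indexed from 0, so the coordinate set {1,...,n} of the paper
  corresponds to {0..<n} here.\<close>

definition l2 :: "(nat \<Rightarrow> complex) set" where
  "l2 = {x. summable (\<lambda>i. (norm (x i))\<^sup>2)}"

definition l2norm :: "(nat \<Rightarrow> complex) \<Rightarrow> real" where
  "l2norm x = sqrt (\<Sum>i. (norm (x i))\<^sup>2)"

definition linf :: "(nat \<Rightarrow> complex) set" where
  "linf = {a. bounded (range a)}"

definition linfnorm :: "(nat \<Rightarrow> complex) \<Rightarrow> real" where
  "linfnorm a = (SUP i. norm (a i))"

definition homogeneous_on_l2 :: "((nat \<Rightarrow> complex) \<Rightarrow> (nat \<Rightarrow> complex)) \<Rightarrow> bool" where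
  "homogeneous_on_l2 \<Omega> \<longleftrightarrow> (\<forall>x\<in>l2. \<forall>c::complex. \<Omega> (\<lambda>i. c * x i) = (\<lambda>i. c * \<Omega> x i))"

definition centralizer :: "((nat \<Rightarrow> complex) \<Rightarrow> (nat \<Rightarrow> complex)) \<Rightarrow> bool" where
  "centralizer \<Omega> \<longleftrightarrow> homogeneous_on_l2 \<Omega> \<and>
     (\<exists>C>0. \<forall>a\<in>linf. \<forall>b\<in>l2.
        (\<lambda>i. \<Omega> (\<lambda>j. a j * b j) i - a i * \<Omega> b i) \<in> l2 \<and>
        l2norm (\<lambda>i. \<Omega> (\<lambda>j. a j * b j) i - a i * \<Omega> b i) \<le> C * linfnorm a * l2norm b)"

definition linear_on_l2 :: "((nat \<Rightarrow> complex) \<Rightarrow> (nat \<Rightarrow> complex)) \<Rightarrow> bool" where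
  "linear_on_l2 L \<longleftrightarrow>
     (\<forall>x\<in>l2. \<forall>y\<in>l2. L (\<lambda>i. x i + y i) = (\<lambda>i. L x i + L y i)) \<and>
     (\<forall>x\<in>l2. \<forall>c::complex. L (\<lambda>i. c * x i) = (\<lambda>i. c * L x i))"

definition trivial_centralizer :: "((nat \<Rightarrow> complex) \<Rightarrow> (nat \<Rightarrow> complex)) \<Rightarrow> bool" where
  "trivial_centralizer \<Omega> \<longleftrightarrow>
     (\<exists>L. linear_on_l2 L \<and> (\<exists>M. \<forall>x\<in>l2. l2norm x \<le> 1 \<longrightarrow>
        (\<lambda>i. \<Omega> x i - L x i) \<in> l2 \<and> l2norm (\<lambda>i. \<Omega> x i - L x i) \<le> M))"

end

theory Submission
  imports Defs
begin

lemma rlnr: fixes r :: real assumes "0 < r" "r < 1" shows "(r * ln r)\<^sup>2 \<le> 1"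
proof -
  have "ln (1 / r) \<le> 1 / r - 1" using assms by (intro ln_le_minus_one) simp
  then have "- ln r \<le> 1 / r - 1" using assms by (simp add: ln_div)
  then have "r * (- ln r) \<le> r * (1 / r - 1)" using assms by (intro mult_left_mono) auto
  then have "r * (- ln r) \<le> 1 - r" using assms by (simp add: algebra_simps)
  moreover have "0 \<le> r * (- ln r)" 
  proof -
    have "ln r \<le> 0" using assms by simp
    then show ?thesis using mult_nonneg_nonpos[of r "ln r"] assms by simp
  qed
  ultimately have "\<bar>r * ln r\<bar> \<le> 1" using assms by simp
  then show ?thesis by (metis abs_le_square_iff abs_one one_power2)
qed

lemma pw:
  fixes \<alpha> \<beta> :: complex and A B S :: real
  assumes "norm \<alpha> \<le> A" "0 < S" "0 < B" "S \<le> A * B"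
  shows "(norm (4 * (\<alpha> * \<beta>) * of_real (ln (norm (\<alpha> * \<beta>) / S)) - \<alpha> * (4 * \<beta> * of_real (ln (norm \<beta> / B)))))\<^sup>2
     \<le> 16 * ((norm (\<alpha> * \<beta>))\<^sup>2 * (ln (A * B / S))\<^sup>2 + (S / B)\<^sup>2 * (norm \<beta>)\<^sup>2)"
proof (cases "\<alpha> = 0 \<or> \<beta> = 0")
  case True
  then show ?thesis by auto
next
  case False
  then have a0: "norm \<alpha> > 0" and b0: "norm \<beta> > 0" by auto
  define r where "r = norm \<alpha> * B / S"
  have r0: "r > 0" unfolding r_def using a0 assms by simp
  have nab: "norm (\<alpha> * \<beta>) / S = r * (norm \<beta> / B)"
    unfolding r_def using assms by (simp add: norm_mult field_simps)
  have eq: "ln (norm (\<alpha> * \<beta>) / S) - ln (norm \<beta> / B) = ln r"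
  proof -
    have "ln (r * (norm \<beta> / B)) = ln r + ln (norm \<beta> / B)"
      using ln_mult[of r "norm \<beta> / B"] r0 b0 assms by simp
    then show ?thesis unfolding nab by simp
  qed
  have "4 * (\<alpha> * \<beta>) * of_real (ln (norm (\<alpha> * \<beta>) / S)) - \<alpha> * (4 * \<beta> * of_real (ln (norm \<beta> / B)))
      = 4 * (\<alpha> * \<beta>) * of_real (ln (norm (\<alpha> * \<beta>) / S) - ln (norm \<beta> / B))"
    by (simp add: algebra_simps)
  also have "\<dots> = 4 * (\<alpha> * \<beta>) * of_real (ln r)" by (simp add: eq)
  finally have D: "(norm (4 * (\<alpha> * \<beta>) * of_real (ln (norm (\<alpha> * \<beta>) / S)) - \<alpha> * (4 * \<beta> * of_real (ln (norm \<beta> / B)))))\<^sup>2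
      = 16 * ((norm (\<alpha> * \<beta>))\<^sup>2 * (ln r)\<^sup>2)"
    by (simp add: norm_mult power_mult_distrib)
  have nn: "0 \<le> (norm (\<alpha> * \<beta>))\<^sup>2 * (ln (A * B / S))\<^sup>2" "0 \<le> (S / B)\<^sup>2 * (norm \<beta>)\<^sup>2" by auto
  show ?thesis
  proof (cases "r \<ge> 1")
    case True
    have "r \<le> A * B / S" unfolding r_def using assms by (intro divide_right_mono mult_right_mono) auto
    then have "ln r \<le> ln (A * B / S)" using r0 by simp
    moreover have "0 \<le> ln r" using True by simp
    ultimately have "(ln r)\<^sup>2 \<le> (ln (A * B / S))\<^sup>2" by (simp add: power_mono)
    then have "(norm (\<alpha> * \<beta>))\<^sup>2 * (ln r)\<^sup>2 \<le> (norm (\<alpha> * \<beta>))\<^sup>2 * (ln (A * B / S))\<^sup>2"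
      by (simp add: mult_left_mono)
    then have "(norm (\<alpha> * \<beta>))\<^sup>2 * (ln r)\<^sup>2 \<le> (norm (\<alpha> * \<beta>))\<^sup>2 * (ln (A * B / S))\<^sup>2 + (S / B)\<^sup>2 * (norm \<beta>)\<^sup>2"
      using nn by linarith
    then show ?thesis unfolding D by (rule mult_left_mono) simp
  next
    case False
    have "norm (\<alpha> * \<beta>) = r * (S * norm \<beta> / B)"
      unfolding r_def using assms by (simp add: norm_mult field_simps)
    then have "(norm (\<alpha> * \<beta>))\<^sup>2 * (ln r)\<^sup>2 = (S / B)\<^sup>2 * (norm \<beta>)\<^sup>2 * (r * ln r)\<^sup>2"
      by (simp add: power_mult_distrib power_divide)
    also have "\<dots> \<le> (S / B)\<^sup>2 * (norm \<beta>)\<^sup>2 * 1"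
      using rlnr[OF r0] False by (intro mult_left_mono) auto
    finally have "(norm (\<alpha> * \<beta>))\<^sup>2 * (ln r)\<^sup>2 \<le> (norm (\<alpha> * \<beta>))\<^sup>2 * (ln (A * B / S))\<^sup>2 + (S / B)\<^sup>2 * (norm \<beta>)\<^sup>2"
      using nn by linarith
    then show ?thesis unfolding D by (rule mult_left_mono) simp
  qed
qed

definition KP :: "(nat \<Rightarrow> complex) \<Rightarrow> (nat \<Rightarrow> complex)" where
  "KP x = (\<lambda>i. 4 * x i * complex_of_real (ln (norm (x i) / l2norm x)))"

lemma l2_sq: "x \<in> l2 \<Longrightarrow> (l2norm x)\<^sup>2 = (\<Sum>i. (norm (x i))\<^sup>2)"
  unfolding l2_def l2norm_def by (simp add: suminf_nonneg)

lemma l2norm_nonneg: "x \<in> l2 \<Longrightarrow> 0 \<le> l2norm x"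
  unfolding l2norm_def l2_def by (simp add: suminf_nonneg)

lemma linf_le: assumes "a \<in> linf" shows "norm (a i) \<le> linfnorm a"
proof -
  from assms obtain K where K: "\<forall>x\<in>range a. norm x \<le> K"
    unfolding linf_def bounded_iff by blast
  have "bdd_above (range (\<lambda>i. norm (a i)))"
    using K by (intro bdd_aboveI2[where M=K]) auto
  then show ?thesis unfolding linfnorm_def by (rule cSUP_upper[OF UNIV_I])
qed

lemma l2_scale: assumes "x \<in> l2" shows "l2norm (\<lambda>i. c * x i) = norm c * l2norm x"
proof -
  have s: "summable (\<lambda>i. (norm (x i))\<^sup>2)" using assms unfolding l2_def by simp
  have "(\<Sum>i. (norm (c * x i))\<^sup>2) = (\<Sum>i. (norm c)\<^sup>2 * (norm (x i))\<^sup>2)"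
    by (simp add: norm_mult power_mult_distrib)
  also have "\<dots> = (norm c)\<^sup>2 * (\<Sum>i. (norm (x i))\<^sup>2)" by (rule suminf_mult[OF s])
  finally show ?thesis unfolding l2norm_def by (simp add: real_sqrt_mult)
qed

lemma KP_hom: "homogeneous_on_l2 KP"
  unfolding homogeneous_on_l2_def
proof (intro ballI allI)
  fix x :: "nat \<Rightarrow> complex" and c :: complex
  assume x: "x \<in> l2"
  show "KP (\<lambda>i. c * x i) = (\<lambda>i. c * KP x i)"
  proof (cases "c = 0")
    case True then show ?thesis by (simp add: KP_def)
  next
    case False
    have "norm (c * x i) / l2norm (\<lambda>i. c * x i) = norm (x i) / l2norm x" for i
      unfolding l2_scale[OF x] norm_mult using False by simp
    then show ?thesis unfolding KP_def by (simp add: algebra_simps)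
  qed
qed

lemma KP_comm:
  assumes a: "a \<in> linf" and b: "b \<in> l2"
  shows "(\<lambda>i. KP (\<lambda>j. a j * b j) i - a i * KP b i) \<in> l2 \<and>
         l2norm (\<lambda>i. KP (\<lambda>j. a j * b j) i - a i * KP b i) \<le> 6 * linfnorm a * l2norm b"
proof -
  define A where "A = linfnorm a"
  define B where "B = l2norm b"
  define S where "S = l2norm (\<lambda>j. a j * b j)"
  define d where "d = (\<lambda>i. KP (\<lambda>j. a j * b j) i - a i * KP b i)"
  have aA: "norm (a i) \<le> A" for i unfolding A_def by (rule linf_le[OF a])
  have A0: "0 \<le> A" using aA[of 0] norm_ge_zero order_trans by blast
  have B0: "0 \<le> B" unfolding B_def by (rule l2norm_nonneg[OF b])
  have sb: "summable (\<lambda>i. (norm (b i))\<^sup>2)" using b unfolding l2_def by simp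
  have abi: "(norm (a i * b i))\<^sup>2 \<le> A\<^sup>2 * (norm (b i))\<^sup>2" for i
    unfolding norm_mult power_mult_distrib using aA[of i]
    by (intro mult_right_mono power_mono) auto
  have sab: "summable (\<lambda>i. (norm (a i * b i))\<^sup>2)"
    by (rule summable_comparison_test[where g="\<lambda>i. A\<^sup>2 * (norm (b i))\<^sup>2"])
       (use abi sb in \<open>auto intro: summable_mult\<close>)
  have abl: "(\<lambda>j. a j * b j) \<in> l2" using sab unfolding l2_def by simp
  have S0: "0 \<le> S" unfolding S_def by (rule l2norm_nonneg[OF abl])
  have S2: "S\<^sup>2 = (\<Sum>i. (norm (a i * b i))\<^sup>2)" unfolding S_def by (rule l2_sq[OF abl])
  have B2: "B\<^sup>2 = (\<Sum>i. (norm (b i))\<^sup>2)" unfolding B_def by (rule l2_sq[OF b])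
  have "S\<^sup>2 \<le> (\<Sum>i. A\<^sup>2 * (norm (b i))\<^sup>2)" unfolding S2
    by (rule suminf_le) (use abi sab sb in \<open>auto intro: summable_mult\<close>)
  also have "\<dots> = A\<^sup>2 * B\<^sup>2" unfolding B2 by (rule suminf_mult[OF sb])
  finally have "S\<^sup>2 \<le> (A * B)\<^sup>2" by (simp add: power_mult_distrib)
  then have SAB: "S \<le> A * B" using A0 B0 by (simp add: power2_le_iff_abs_le)
  show ?thesis
  proof (cases "S = 0")
    case True
    then have "(\<Sum>i. (norm (a i * b i))\<^sup>2) = 0" using S2 by simp
    then have "\<forall>n. a n = 0 \<or> b n = 0"
      using sab by (simp add: suminf_eq_zero_iff)
    then have z: "a i * b i = 0" for i by simp
    have "d = (\<lambda>i. 0)"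
    proof
      fix i
      show "d i = 0" using z[of i] unfolding d_def KP_def by auto
    qed
    moreover have "(\<lambda>i::nat. 0::complex) \<in> l2" unfolding l2_def by simp
    moreover have "l2norm (\<lambda>i::nat. 0::complex) = 0" unfolding l2norm_def by simp
    ultimately show ?thesis unfolding d_def[symmetric] using A0 B0 unfolding A_def B_def by simp
  next
    case False
    then have Sp: "0 < S" using S0 by simp
    have Bp: "0 < B"
    proof (rule ccontr)
      assume "\<not> 0 < B"
      then have "B = 0" using B0 by simp
      then show False using SAB Sp by simp
    qed
    define Lg where "Lg = ln (A * B / S)"
    define g where "g i = 16 * ((norm (a i * b i))\<^sup>2 * Lg\<^sup>2 + (S / B)\<^sup>2 * (norm (b i))\<^sup>2)" for i
    have dg: "(norm (d i))\<^sup>2 \<le> g i" for i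
      unfolding d_def g_def Lg_def KP_def S_def[symmetric] B_def[symmetric]
      by (rule pw[OF aA Sp Bp SAB])
    have sg1: "summable (\<lambda>i. (norm (a i * b i))\<^sup>2 * Lg\<^sup>2)" by (rule summable_mult2[OF sab])
    have sg2: "summable (\<lambda>i. (S / B)\<^sup>2 * (norm (b i))\<^sup>2)" by (rule summable_mult[OF sb])
    have sg: "summable g" unfolding g_def by (intro summable_mult summable_add sg1 sg2)
    have sd: "summable (\<lambda>i. (norm (d i))\<^sup>2)"
      by (rule summable_comparison_test[where g=g]) (use dg sg in auto)
    have sXY: "summable (\<lambda>i. (norm (a i * b i))\<^sup>2 * Lg\<^sup>2 + (S / B)\<^sup>2 * (norm (b i))\<^sup>2)"
      by (rule summable_add[OF sg1 sg2])
    have e1: "(\<Sum>i. g i) = 16 * (\<Sum>i. (norm (a i * b i))\<^sup>2 * Lg\<^sup>2 + (S / B)\<^sup>2 * (norm (b i))\<^sup>2)"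
      unfolding g_def by (rule suminf_mult[OF sXY])
    have e2: "(\<Sum>i. (norm (a i * b i))\<^sup>2 * Lg\<^sup>2 + (S / B)\<^sup>2 * (norm (b i))\<^sup>2)
       = (\<Sum>i. (norm (a i * b i))\<^sup>2 * Lg\<^sup>2) + (\<Sum>i. (S / B)\<^sup>2 * (norm (b i))\<^sup>2)"
      by (rule suminf_add[OF sg1 sg2, symmetric])
    have e3: "(\<Sum>i. (norm (a i * b i))\<^sup>2 * Lg\<^sup>2) = S\<^sup>2 * Lg\<^sup>2"
      unfolding S2 by (rule suminf_mult2[OF sab, symmetric])
    have e4: "(\<Sum>i. (S / B)\<^sup>2 * (norm (b i))\<^sup>2) = (S / B)\<^sup>2 * B\<^sup>2"
      unfolding B2 by (rule suminf_mult[OF sb])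
    have e5: "(S / B)\<^sup>2 * B\<^sup>2 = S\<^sup>2" using Bp by (simp add: power_divide)
    have e6: "S\<^sup>2 * Lg\<^sup>2 = (S * Lg)\<^sup>2" by (simp add: power_mult_distrib)
    have "(\<Sum>i. g i) = 16 * ((S * Lg)\<^sup>2 + S\<^sup>2)"
      unfolding e1 e2 e3 e4 e5 e6 ..
    also have "\<dots> \<le> 16 * ((A * B)\<^sup>2 + (A * B)\<^sup>2)"
    proof -
      have "Lg \<le> A * B / S - 1" unfolding Lg_def using Sp Bp SAB
        by (intro ln_le_minus_one) simp
      then have "S * Lg \<le> S * (A * B / S - 1)" using Sp by (simp add: mult_left_mono)
      also have "\<dots> = A * B - S" using Sp by (simp add: field_simps)
      finally have u: "S * Lg \<le> A * B" using Sp by linarith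
      have "1 \<le> A * B / S" using Sp SAB by simp
      then have "0 \<le> Lg" unfolding Lg_def by simp
      then have "(S * Lg)\<^sup>2 \<le> (A * B)\<^sup>2" using u Sp by (intro power_mono) auto
      moreover have "S\<^sup>2 \<le> (A * B)\<^sup>2" using SAB Sp by (intro power_mono) auto
      ultimately show ?thesis by simp
    qed
    finally have gb: "(\<Sum>i. g i) \<le> 32 * (A * B)\<^sup>2" by simp
    have "(\<Sum>i. (norm (d i))\<^sup>2) \<le> (\<Sum>i. g i)" by (rule suminf_le[OF dg sd sg])
    moreover have "(6 * A * B)\<^sup>2 = 36 * (A * B)\<^sup>2" by (simp add: power2_eq_square)
    moreover have "0 \<le> (A * B)\<^sup>2" by simp
    ultimately have "(\<Sum>i. (norm (d i))\<^sup>2) \<le> (6 * A * B)\<^sup>2" using gb by linarith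
    then have "l2norm d \<le> 6 * A * B" unfolding l2norm_def using A0 B0
      by (intro real_le_lsqrt) auto
    moreover have "d \<in> l2" using sd unfolding l2_def by simp
    ultimately show ?thesis unfolding d_def A_def B_def by simp
  qed
qed

lemma KP_central: "centralizer KP"
  unfolding centralizer_def using KP_hom KP_comm by (intro conjI exI[of _ 6]) auto

lemma l2_finite: "(\<And>i. i \<ge> n \<Longrightarrow> x i = 0) \<Longrightarrow> x \<in> l2"
  unfolding l2_def mem_Collect_eq by (rule summable_finite[of "{..<n}"]) (simp_all add: not_less)

lemma trunc: "x \<in> l2 \<Longrightarrow> finite A \<Longrightarrow> (\<Sum>i\<in>A. (norm (x i))\<^sup>2) \<le> (l2norm x)\<^sup>2"
  by (simp add: l2_sq sum_le_suminf l2_def)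

lemma para: "(norm (a + y::complex))\<^sup>2 + (norm (a - y))\<^sup>2 = 2 * (norm a)\<^sup>2 + 2 * (norm y)\<^sup>2"
  unfolding cmod_power2 by (simp add: power2_eq_square algebra_simps)

lemma greedy:
  fixes y :: "nat \<Rightarrow> nat \<Rightarrow> complex" and A :: "nat set"
  assumes "finite A"
  shows "\<exists>\<epsilon>::nat\<Rightarrow>real. (\<forall>j. \<epsilon> j = 1 \<or> \<epsilon> j = -1) \<and>
     (\<Sum>i\<in>A. (norm (\<Sum>j<n. of_real (\<epsilon> j) * y j i))\<^sup>2) \<le> (\<Sum>j<n. \<Sum>i\<in>A. (norm (y j i))\<^sup>2)"
proof (induction n)
  case 0
  show ?case by (rule exI[of _ "\<lambda>_. 1"]) simp
next
  case (Suc n)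
  then obtain \<epsilon> :: "nat \<Rightarrow> real" where e: "\<forall>j. \<epsilon> j = 1 \<or> \<epsilon> j = -1"
    and b: "(\<Sum>i\<in>A. (norm (\<Sum>j<n. of_real (\<epsilon> j) * y j i))\<^sup>2) \<le> (\<Sum>j<n. \<Sum>i\<in>A. (norm (y j i))\<^sup>2)"
    by blast
  define a where "a i = (\<Sum>j<n. of_real (\<epsilon> j) * y j i)" for i
  have P: "(\<Sum>i\<in>A. (norm (a i + y n i))\<^sup>2) + (\<Sum>i\<in>A. (norm (a i - y n i))\<^sup>2)
      = 2 * (\<Sum>i\<in>A. (norm (a i))\<^sup>2) + 2 * (\<Sum>i\<in>A. (norm (y n i))\<^sup>2)"
    by (simp add: sum.distrib[symmetric] sum_distrib_left para)
  obtain s :: real where s: "s = 1 \<or> s = -1"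
    and sb: "(\<Sum>i\<in>A. (norm (a i + of_real s * y n i))\<^sup>2) \<le> (\<Sum>i\<in>A. (norm (a i))\<^sup>2) + (\<Sum>i\<in>A. (norm (y n i))\<^sup>2)"
  proof (cases "(\<Sum>i\<in>A. (norm (a i + y n i))\<^sup>2) \<le> (\<Sum>i\<in>A. (norm (a i))\<^sup>2) + (\<Sum>i\<in>A. (norm (y n i))\<^sup>2)")
    case True
    then show ?thesis using that[of 1] by simp
  next
    case False
    then have "(\<Sum>i\<in>A. (norm (a i - y n i))\<^sup>2) \<le> (\<Sum>i\<in>A. (norm (a i))\<^sup>2) + (\<Sum>i\<in>A. (norm (y n i))\<^sup>2)"
      using P by linarith
    then show ?thesis using that[of "-1"] by simp
  qed
  define \<epsilon>' where "\<epsilon>' = \<epsilon>(n := s)"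
  have eq: "(\<Sum>j<Suc n. of_real (\<epsilon>' j) * y j i) = a i + of_real s * y n i" for i
    unfolding a_def \<epsilon>'_def by (simp add: lessThan_Suc)
  show ?case
  proof (intro exI conjI)
    show "\<forall>j. \<epsilon>' j = 1 \<or> \<epsilon>' j = -1" using e s by (simp add: \<epsilon>'_def)
    show "(\<Sum>i\<in>A. (norm (\<Sum>j<Suc n. of_real (\<epsilon>' j) * y j i))\<^sup>2) \<le> (\<Sum>j<Suc n. \<Sum>i\<in>A. (norm (y j i))\<^sup>2)"
      using sb b unfolding eq a_def by simp
  qed
qed

lemma lin_zero: assumes "linear_on_l2 L" shows "L (\<lambda>i. 0) = (\<lambda>i. 0)"
proof -
  have "(\<lambda>i::nat. 0::complex) \<in> l2" by (rule l2_finite[of 0]) auto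
  moreover have h: "\<And>x c. x \<in> l2 \<Longrightarrow> L (\<lambda>i. c * x i) = (\<lambda>i. c * L x i)"
    using assms unfolding linear_on_l2_def by blast
  ultimately have "L (\<lambda>i. 0 * 0) = (\<lambda>i. 0 * L (\<lambda>i. 0) i)" by blast
  then show ?thesis by simp
qed

lemma lin_sum: assumes "linear_on_l2 L"
  shows "L (\<lambda>i. if i < n then c i else 0) = (\<lambda>i. \<Sum>j<n. c j * L (\<lambda>k. if k = j then 1 else 0) i)"
proof (induction n)
  case 0
  then show ?case using lin_zero[OF assms] by simp
next
  case (Suc n)
  define v where "v = (\<lambda>i. if i < n then c i else 0)"
  define e where "e = (\<lambda>k::nat. if k = n then 1 else (0::complex))"
  have vl: "v \<in> l2" unfolding v_def by (rule l2_finite[of n]) auto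
  have el: "e \<in> l2" unfolding e_def by (rule l2_finite[of "Suc n"]) auto
  have cel: "(\<lambda>i. c n * e i) \<in> l2" unfolding e_def by (rule l2_finite[of "Suc n"]) auto
  have "(\<lambda>i. if i < Suc n then c i else 0) = (\<lambda>i. v i + c n * e i)"
    unfolding v_def e_def by (rule ext) (simp add: less_Suc_eq)
  then have "L (\<lambda>i. if i < Suc n then c i else 0) = (\<lambda>i. L v i + L (\<lambda>i. c n * e i) i)"
    using assms vl cel unfolding linear_on_l2_def by simp
  also have "L (\<lambda>i. c n * e i) = (\<lambda>i. c n * L e i)"
    using assms el unfolding linear_on_l2_def by simp
  finally show ?case using Suc unfolding v_def e_def by (simp add: lessThan_Suc add_ac)
qed

lemma KP_basis: "KP (\<lambda>i. if i = j then 1 else 0) = (\<lambda>i. 0)"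
proof -
  have "l2norm (\<lambda>i. if i = j then 1 else 0) = 1"
  proof -
    have "(\<lambda>i. (cmod (if i = j then 1 else 0))\<^sup>2) = (\<lambda>i. if i = j then 1 else (0::real))"
      by auto
    moreover have "(\<lambda>i. if i = j then 1 else (0::real)) sums 1"
      using sums_single[of j "\<lambda>_. 1::real"] by simp
    ultimately show ?thesis unfolding l2norm_def by (simp add: sums_iff)
  qed
  then show ?thesis unfolding KP_def by auto
qed

lemma KP_nontrivial: "\<not> trivial_centralizer KP"
proof
  assume "trivial_centralizer KP"
  then obtain L M where lin: "linear_on_l2 L" and bd: "\<forall>x\<in>l2. l2norm x \<le> 1 \<longrightarrow>
        (\<lambda>i. KP x i - L x i) \<in> l2 \<and> l2norm (\<lambda>i. KP x i - L x i) \<le> M"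
    unfolding trivial_centralizer_def by blast
  define e where "e j = (\<lambda>k::nat. if k = j then 1 else (0::complex))" for j
  have el: "e j \<in> l2" "l2norm (e j) \<le> 1" for j
  proof -
    show "e j \<in> l2" unfolding e_def by (rule l2_finite[of "Suc j"]) auto
    have "(\<lambda>i. (cmod (e j i))\<^sup>2) = (\<lambda>i. if i = j then 1 else (0::real))"
      unfolding e_def by auto
    moreover have "(\<lambda>i. if i = j then 1 else (0::real)) sums 1"
      using sums_single[of j "\<lambda>_. 1::real"] by simp
    ultimately show "l2norm (e j) \<le> 1" unfolding l2norm_def by (simp add: sums_iff)
  qed
  have M0: "0 \<le> M" using bd el[of 0] l2norm_nonneg[of "\<lambda>i. KP (e 0) i - L (e 0) i"] by auto
  have ej: "(\<Sum>i\<in>A. (norm (L (e j) i))\<^sup>2) \<le> M\<^sup>2" if "finite A" for j A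
  proof -
    have KPe: "KP (e j) = (\<lambda>i. 0)" unfolding e_def by (rule KP_basis)
    have h: "(\<lambda>i. KP (e j) i - L (e j) i) \<in> l2" "l2norm (\<lambda>i. KP (e j) i - L (e j) i) \<le> M"
      using bd el[of j] by auto
    have "(\<Sum>i\<in>A. (norm (L (e j) i))\<^sup>2) = (\<Sum>i\<in>A. (norm (KP (e j) i - L (e j) i))\<^sup>2)"
      by (simp add: KPe)
    also have "\<dots> \<le> (l2norm (\<lambda>i. KP (e j) i - L (e j) i))\<^sup>2"
      by (rule trunc[OF h(1) that])
    also have "\<dots> \<le> M\<^sup>2" using h(2) l2norm_nonneg[OF h(1)] by (simp add: power_mono)
    finally show ?thesis .
  qed
  define N :: nat where "N = nat \<lceil>exp M\<rceil> + 1"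
  have N1: "N \<ge> 1" unfolding N_def by simp
  have "exp M < real N" unfolding N_def by linarith
  then have lnN: "M < ln (real N)" using ln_less_cancel_iff[of "exp M" "real N"] N1 by simp
  obtain \<epsilon> :: "nat \<Rightarrow> real" where eps: "\<forall>j. \<epsilon> j = 1 \<or> \<epsilon> j = -1"
    and gb: "(\<Sum>i<N. (norm (\<Sum>j<N. of_real (\<epsilon> j) * L (e j) i))\<^sup>2) \<le> (\<Sum>j<N. \<Sum>i<N. (norm (L (e j) i))\<^sup>2)"
    using greedy[where A="{..<N}" and n=N and y="\<lambda>j. L (e j)"] by auto
  have absE: "\<bar>\<epsilon> j\<bar> = 1" for j using eps by (metis abs_1 abs_minus_cancel)
  define c where "c j = complex_of_real (\<epsilon> j / sqrt N)" for j
  define x where "x = (\<lambda>i. if i < N then c i else 0)"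
  have xl: "x \<in> l2" unfolding x_def by (rule l2_finite[of N]) auto
  have ncx: "norm (c i) = 1 / sqrt N" for i unfolding c_def using absE[of i] by (simp add: norm_divide)
  have x1: "l2norm x = 1"
  proof -
    have "(\<Sum>i. (cmod (x i))\<^sup>2) = (\<Sum>i<N. (cmod (x i))\<^sup>2)"
      by (rule suminf_finite) (auto simp: x_def)
    also have "\<dots> = (\<Sum>i<N. 1 / real N)" by (simp add: x_def ncx power_divide)
    also have "\<dots> = 1" using N1 by simp
    finally show ?thesis unfolding l2norm_def by simp
  qed
  have Lx: "L x = (\<lambda>i. \<Sum>j<N. c j * L (e j) i)"
    unfolding x_def e_def by (rule lin_sum[OF lin])
  have KPx: "norm (KP x i) = 2 * ln N / sqrt N" if "i < N" for i
  proof -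
    have "norm (KP x i) = 4 * (1 / sqrt N) * \<bar>ln (1 / sqrt N)\<bar>"
      unfolding KP_def x1 using that by (simp add: x_def ncx norm_mult)
    also have "ln (1 / sqrt N) = - ln N / 2" using N1 by (simp add: ln_div ln_sqrt)
    finally show ?thesis using N1 by simp
  qed
  have sKP: "L2_set (\<lambda>i. norm (KP x i)) {..<N} = 2 * ln N"
  proof -
    have "(\<Sum>i<N. (norm (KP x i))\<^sup>2) = (\<Sum>i<N. (2 * ln N / sqrt N)\<^sup>2)"
      by (simp add: KPx)
    also have "\<dots> = (2 * ln N)\<^sup>2" using N1 by (simp add: power_divide)
    finally have "(\<Sum>i<N. (norm (KP x i))\<^sup>2) = (2 * ln N)\<^sup>2" .
    moreover have "0 \<le> ln (real N)" using N1 by simp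
    ultimately show ?thesis unfolding L2_set_def by (simp add: real_sqrt_mult)
  qed
  have sL: "L2_set (\<lambda>i. norm (L x i)) {..<N} \<le> M"
  proof -
    have "(\<Sum>i<N. (norm (L x i))\<^sup>2) = (\<Sum>i<N. (norm (\<Sum>j<N. of_real (\<epsilon> j) * L (e j) i))\<^sup>2) / N"
    proof -
      have q: "L x i = (\<Sum>j<N. of_real (\<epsilon> j) * L (e j) i) / sqrt N" for i
        unfolding Lx c_def by (simp add: sum_divide_distrib)
      have "(norm (L x i))\<^sup>2 = (norm (\<Sum>j<N. of_real (\<epsilon> j) * L (e j) i))\<^sup>2 / N" for i
      proof -
        have "norm (L x i) = norm (\<Sum>j<N. of_real (\<epsilon> j) * L (e j) i) / sqrt N"
          unfolding q[of i] norm_divide by simp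
        then show ?thesis using N1 by (simp add: power_divide)
      qed
      then show ?thesis by (simp add: sum_divide_distrib)
    qed
    also have "\<dots> \<le> (\<Sum>j<N. \<Sum>i<N. (norm (L (e j) i))\<^sup>2) / N"
      using gb by (simp add: divide_right_mono)
    also have "\<dots> \<le> (\<Sum>j<N. M\<^sup>2) / N"
      by (intro divide_right_mono sum_mono ej) auto
    also have "\<dots> = M\<^sup>2" using N1 by simp
    finally show ?thesis unfolding L2_set_def using M0 by (simp add: real_le_lsqrt)
  qed
  have sD: "L2_set (\<lambda>i. norm (KP x i - L x i)) {..<N} \<le> M"
  proof -
    have h: "(\<lambda>i. KP x i - L x i) \<in> l2" "l2norm (\<lambda>i. KP x i - L x i) \<le> M"
      using bd xl x1 by auto
    have "(\<Sum>i<N. (norm (KP x i - L x i))\<^sup>2) \<le> (l2norm (\<lambda>i. KP x i - L x i))\<^sup>2"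
      using trunc[OF h(1)] by simp
    also have "\<dots> \<le> M\<^sup>2" using h(2) l2norm_nonneg[OF h(1)] by (simp add: power_mono)
    finally show ?thesis unfolding L2_set_def using M0 by (simp add: real_le_lsqrt)
  qed
  have "L2_set (\<lambda>i. norm (KP x i)) {..<N} \<le> L2_set (\<lambda>i. norm (KP x i - L x i) + norm (L x i)) {..<N}"
    by (rule L2_set_mono) (metis add.commute norm_triangle_sub, simp)
  also have "\<dots> \<le> L2_set (\<lambda>i. norm (KP x i - L x i)) {..<N} + L2_set (\<lambda>i. norm (L x i)) {..<N}"
    by (rule L2_set_triangle_ineq)
  finally have "2 * ln N \<le> M + M" using sKP sL sD by linarith
  then show False using lnN by linarith
qed

theorem proposition5p7:
  fixes \<delta> :: "nat \<Rightarrow> real"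
  assumes "\<forall>n\<ge>1. 1 < \<delta> n"
    and "filterlim \<delta> at_top sequentially"
  shows "\<exists>\<Omega> (\<kappa>::nat \<Rightarrow> real) (a::nat \<Rightarrow> nat \<Rightarrow> complex).
           centralizer \<Omega> \<and> \<not> trivial_centralizer \<Omega> \<and>
           (\<forall>n\<ge>1. 0 < \<kappa> n \<and> \<kappa> n \<le> \<delta> n) \<and>
           filterlim \<kappa> at_top sequentially \<and>
           (\<forall>n\<ge>1. a n \<in> l2 \<and> a n \<noteq> (\<lambda>i. 0) \<and>
                   (\<forall>i. a n i \<noteq> 0 \<longrightarrow> i < n) \<and>
                   \<Omega> (a n) = (\<lambda>i. - 2 * a n i * complex_of_real (ln (\<kappa> n))))"
proof -
  define m where "m n = min n (nat \<lfloor>\<delta> n\<rfloor>)" for n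
  define \<kappa> where "\<kappa> n = real (m n)" for n
  define a where "a n = (\<lambda>i::nat. if i < m n then 1 else (0::complex))" for n
  have m1: "1 \<le> m n" if "n \<ge> 1" for n
  proof -
    have "1 < \<delta> n" using assms(1) that by simp
    then have "1 \<le> \<lfloor>\<delta> n\<rfloor>" by linarith
    then have "1 \<le> nat \<lfloor>\<delta> n\<rfloor>" by (simp add: le_nat_iff)
    then show ?thesis unfolding m_def using that by simp
  qed
  have kd: "\<kappa> n \<le> \<delta> n" if "n \<ge> 1" for n
  proof -
    have "1 < \<delta> n" using assms(1) that by simp
    then have "real (nat \<lfloor>\<delta> n\<rfloor>) \<le> \<delta> n" by linarith
    moreover have "real (m n) \<le> real (nat \<lfloor>\<delta> n\<rfloor>)" unfolding m_def by simp
    ultimately show ?thesis unfolding \<kappa>_def by linarith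
  qed
  have lim: "filterlim \<kappa> at_top sequentially"
    unfolding filterlim_at_top
  proof
    fix Z :: real
    have "eventually (\<lambda>n. Z + 1 \<le> \<delta> n) sequentially"
      using assms(2) unfolding filterlim_at_top by blast
    moreover have "eventually (\<lambda>n. nat \<lceil>Z\<rceil> \<le> n) sequentially" by (rule eventually_ge_at_top)
    ultimately show "eventually (\<lambda>n. Z \<le> \<kappa> n) sequentially"
    proof eventually_elim
      case (elim n)
      have "Z \<le> real n" using elim(2) by linarith
      moreover have "Z \<le> real (nat \<lfloor>\<delta> n\<rfloor>)" using elim(1) by linarith
      ultimately show ?case unfolding \<kappa>_def m_def by simp
    qed
  qed
  have an: "a n \<in> l2 \<and> a n \<noteq> (\<lambda>i. 0) \<and> (\<forall>i. a n i \<noteq> 0 \<longrightarrow> i < n) \<and>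
      KP (a n) = (\<lambda>i. - 2 * a n i * complex_of_real (ln (\<kappa> n)))" if n1: "n \<ge> 1" for n
  proof (intro conjI)
    show al: "a n \<in> l2" unfolding a_def by (rule l2_finite[of "m n"]) auto
    show "a n \<noteq> (\<lambda>i. 0)"
    proof
      assume "a n = (\<lambda>i. 0)"
      then have "a n 0 = 0" by simp
      then show False using m1[OF n1] unfolding a_def by simp
    qed
    show "\<forall>i. a n i \<noteq> 0 \<longrightarrow> i < n" unfolding a_def m_def by auto
    have nrm: "l2norm (a n) = sqrt (real (m n))"
    proof -
      have "(\<Sum>i. (cmod (a n i))\<^sup>2) = (\<Sum>i<m n. (cmod (a n i))\<^sup>2)"
        by (rule suminf_finite) (auto simp: a_def)
      also have "\<dots> = real (m n)" by (simp add: a_def)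
      finally show ?thesis unfolding l2norm_def by simp
    qed
    have mp: "0 < real (m n)" using m1[OF n1] by simp
    have lnq: "ln (1 / sqrt (real (m n))) = - ln (real (m n)) / 2"
      using mp by (simp add: ln_div ln_sqrt)
    show "KP (a n) = (\<lambda>i. - 2 * a n i * complex_of_real (ln (\<kappa> n)))"
    proof
      fix i
      show "KP (a n) i = - 2 * a n i * complex_of_real (ln (\<kappa> n))"
      proof (cases "i < m n")
        case True
        then have "KP (a n) i = 4 * complex_of_real (ln (1 / sqrt (real (m n))))"
          unfolding KP_def nrm by (simp add: a_def)
        also have "\<dots> = - 2 * complex_of_real (ln (real (m n)))" unfolding lnq by simp
        finally show ?thesis using True unfolding a_def \<kappa>_def by simp
      next
        case False
        then show ?thesis unfolding KP_def a_def by simp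
      qed
    qed
  qed
  have k0: "\<forall>n\<ge>1. 0 < \<kappa> n"
  proof (intro allI impI)
    fix n :: nat assume "1 \<le> n"
    then have "1 \<le> m n" by (rule m1)
    then show "0 < \<kappa> n" unfolding \<kappa>_def by simp
  qed
  show ?thesis
    by (rule exI[of _ KP], rule exI[of _ \<kappa>], rule exI[of _ a])
       (use KP_central KP_nontrivial kd lim an k0 in auto)
qed

end
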